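(* For all positive integers $i,j$ and nonnegative integers $k$ such that $(i-k-2)(j-k-2)\geq (k+1)^2$, we have $R_k^{\mathcal{SP}}(i,j)=i+j-1$, where $\mathcal{SP}$ is the class of split graphs.
   Context: All graphs are finite and simple. For a graph $G$ and a nonnegative integer $k$, a $k$-sparse $j$-set is a set of $j$ vertices of $G$ inducing a subgraph of maximum degree at most $k$; a $k$-dense $i$-set is a set of $i$ vertices of $G$ that is $k$-sparse in the complement of $G$. For a graph class $\mathcal{G}$, $R_k^{\mathcal{G}}(i,j)$ is the smallest natural number $n$ such that every graph on $n$ vertices in $\mathcal{G}$ has either a $k$-dense $i$-set or a $k$-sparse $j$-set. A split graph is a graph whose vertex set can be partitioned into a clique and an independent set. *)

theory Defs
  imports Main
begin

text \<open>A finite simple graph with vertex set V and adjacency relation E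
  (only the values of E on V matter).\<close>
definition simple_graph :: "'a set \<Rightarrow> ('a \<Rightarrow> 'a \<Rightarrow> bool) \<Rightarrow> bool" where
  "simple_graph V E \<longleftrightarrow> finite V \<and> (\<forall>u\<in>V. \<forall>v\<in>V. E u v \<longleftrightarrow> E v u) \<and> (\<forall>v\<in>V. \<not> E v v)"

definition compl_adj :: "('a \<Rightarrow> 'a \<Rightarrow> bool) \<Rightarrow> 'a \<Rightarrow> 'a \<Rightarrow> bool" where
  "compl_adj E u v \<longleftrightarrow> u \<noteq> v \<and> \<not> E u v"

definition k_sparse_set :: "'a set \<Rightarrow> ('a \<Rightarrow> 'a \<Rightarrow> bool) \<Rightarrow> nat \<Rightarrow> nat \<Rightarrow> 'a set \<Rightarrow> bool" where
  "k_sparse_set V E k j S \<longleftrightarrow> S \<subseteq> V \<and> card S = j \<and> (\<forall>v\<in>S. card {u\<in>S. E v u} \<le> k)"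

definition k_dense_set :: "'a set \<Rightarrow> ('a \<Rightarrow> 'a \<Rightarrow> bool) \<Rightarrow> nat \<Rightarrow> nat \<Rightarrow> 'a set \<Rightarrow> bool" where
  "k_dense_set V E k i S \<longleftrightarrow> k_sparse_set V (compl_adj E) k i S"

definition split_graph :: "'a set \<Rightarrow> ('a \<Rightarrow> 'a \<Rightarrow> bool) \<Rightarrow> bool" where
  "split_graph V E \<longleftrightarrow> (\<exists>C I. C \<union> I = V \<and> C \<inter> I = {} \<and>
      (\<forall>u\<in>C. \<forall>v\<in>C. u \<noteq> v \<longrightarrow> E u v) \<and> (\<forall>u\<in>I. \<forall>v\<in>I. \<not> E u v))"

definition ramsey_k :: "(nat set \<Rightarrow> (nat \<Rightarrow> nat \<Rightarrow> bool) \<Rightarrow> bool) \<Rightarrow> nat \<Rightarrow> nat \<Rightarrow> nat \<Rightarrow> nat" where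
  "ramsey_k cls k i j = (LEAST n. \<forall>E. simple_graph {0..<n} E \<and> cls {0..<n} E \<longrightarrow>
      (\<exists>S. k_dense_set {0..<n} E k i S) \<or> (\<exists>S. k_sparse_set {0..<n} E k j S))"

end

theory Submission
  imports Defs
begin

definition adjB :: "nat \<Rightarrow> nat \<Rightarrow> nat \<Rightarrow> nat \<Rightarrow> bool" where
  "adjB k l u w \<longleftrightarrow> (\<exists>r<k+1. (u*(k+1)+r) mod l = w)"

definition GE :: "nat \<Rightarrow> nat \<Rightarrow> nat \<Rightarrow> nat \<Rightarrow> nat \<Rightarrow> bool" where
  "GE k m l a b \<longleftrightarrow> (a<m \<and> b<m \<and> a\<noteq>b) \<or> (a<m \<and> m\<le>b \<and> adjB k l a (b-m))
     \<or> (b<m \<and> m\<le>a \<and> adjB k l b (a-m))"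

lemma mod_inj_aux:
  fixes a r1 r2 l :: nat
  assumes "(a+r1) mod l = (a+r2) mod l" "r1 < l" "r2 < l"
  shows "r1 = r2"
proof -
  have key: "x = y" if "x \<le> y" "(a+x) mod l = (a+y) mod l" "x < l" "y < l" for x y :: nat
  proof -
    have "l dvd (a+y) - (a+x)" using that mod_eq_dvd_iff_nat[of "a+x" "a+y" l] by simp
    then have "l dvd y - x" by simp
    moreover have "y - x < l" using that by simp
    ultimately have "y - x = 0" using dvd_imp_le by (metis gr0I nat_dvd_not_less)
    then show ?thesis using that by simp
  qed
  show ?thesis using key[of r1 r2] key[of r2 r1] assms by (cases "r1 \<le> r2") auto
qed

lemma nbrC_card:
  assumes "m*(k+1) \<le> l*(m-k-1)"
  shows "card {u. u<m \<and> adjB k l u w} \<le> m-k-1"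
proof -
  have s1: "{u. u<m \<and> adjB k l u w} \<subseteq> (\<lambda>x. x div (k+1)) ` {x. x < m*(k+1) \<and> x mod l = w}"
  proof
    fix u assume "u \<in> {u. u<m \<and> adjB k l u w}"
    then obtain r where r: "r < k+1" "(u*(k+1)+r) mod l = w" "u < m" unfolding adjB_def by auto
    have "u*(k+1)+r < m*(k+1)"
    proof -
      have "Suc u * (k+1) \<le> m*(k+1)" using r(3) by (intro mult_right_mono) auto
      then show ?thesis using r(1) by simp
    qed
    moreover have "(u*(k+1)+r) div (k+1) = u"
    proof -
      have "(r + u*(k+1)) div (k+1) = u + r div (k+1)" by (rule div_mult_self1) simp
      then show ?thesis using r(1) by (simp add: add.commute)
    qed
    ultimately show "u \<in> (\<lambda>x. x div (k+1)) ` {x. x < m*(k+1) \<and> x mod l = w}"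
      using r(2) by (intro image_eqI[where x="u*(k+1)+r"]) auto
  qed
  have s2: "{x. x < m*(k+1) \<and> x mod l = w} \<subseteq> (\<lambda>t. w + l*t) ` {..<m-k-1}"
  proof
    fix x assume x: "x \<in> {x. x < m*(k+1) \<and> x mod l = w}"
    have e: "x = w + l*(x div l)" 
    proof -
      have x2: "x mod l = w" using x by simp
      show ?thesis using mod_mult_div_eq[of x l] unfolding x2 by linarith
    qed
    have "l*(x div l) \<le> x" using e by linarith
    moreover have "x < m*(k+1)" using x by simp
    ultimately have "l*(x div l) < l*(m-k-1)" using assms by linarith
    then have "x div l < m-k-1" by simp
    then show "x \<in> (\<lambda>t. w + l*t) ` {..<m-k-1}" using e by blast
  qed
  have "card {u. u<m \<and> adjB k l u w} \<le> card ((\<lambda>x. x div (k+1)) ` {x. x < m*(k+1) \<and> x mod l = w})"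
    using s1 by (intro card_mono) auto
  also have "\<dots> \<le> card {x. x < m*(k+1) \<and> x mod l = w}" by (rule card_image_le) auto
  also have "\<dots> \<le> card ((\<lambda>t. w + l*t) ` {..<m-k-1})" using s2 by (intro card_mono) auto
  also have "\<dots> \<le> m-k-1" using card_image_le[of "{..<m-k-1}" "\<lambda>t. w + l*t"] by simp
  finally show ?thesis .
qed

lemma nbrI_card:
  assumes "k+1 \<le> l"
  shows "k+1 \<le> card {w. w<l \<and> adjB k l u w}"
proof -
  have l0: "l > 0" using assms by simp
  have inj: "inj_on (\<lambda>r. (u*(k+1)+r) mod l) {..<k+1}"
  proof (rule inj_onI)
    fix r1 r2 assume "r1 \<in> {..<k+1}" "r2 \<in> {..<k+1}"
      "(u*(k+1)+r1) mod l = (u*(k+1)+r2) mod l"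
    then show "r1 = r2" using assms mod_inj_aux[of "u*(k+1)" r1 l r2] by simp
  qed
  have sub: "(\<lambda>r. (u*(k+1)+r) mod l) ` {..<k+1} \<subseteq> {w. w<l \<and> adjB k l u w}"
    using l0 unfolding adjB_def by auto
  have "k+1 = card ((\<lambda>r. (u*(k+1)+r) mod l) ` {..<k+1})" using card_image[OF inj] by simp
  also have "\<dots> \<le> card {w. w<l \<and> adjB k l u w}" using sub by (intro card_mono) auto
  finally show ?thesis .
qed

lemma no_dense:
  assumes "k+1 \<le> m" "m*(k+1) \<le> l*(m-k-1)" "S \<subseteq> {0..<m+l}" "card S = m+1"
  shows "\<exists>v\<in>S. k < card {u\<in>S. compl_adj (GE k m l) v u}"
proof -
  have fS: "finite S" using assms(3) finite_subset by blast
  have "\<not> S \<subseteq> {..<m}"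
  proof
    assume "S \<subseteq> {..<m}"
    then have "card S \<le> m" using card_mono[of "{..<m}" S] by simp
    then show False using assms(4) by simp
  qed
  then obtain v where v: "v \<in> S" "m \<le> v" by (meson lessThan_iff not_le subsetI)
  define A where "A = {u\<in>S. compl_adj (GE k m l) v u}"
  have sub: "S \<subseteq> A \<union> {v} \<union> {u. u<m \<and> adjB k l u (v-m)}"
  proof
    fix u assume u: "u \<in> S"
    show "u \<in> A \<union> {v} \<union> {u. u<m \<and> adjB k l u (v-m)}"
      using u v unfolding A_def compl_adj_def GE_def by auto
  qed
  have "card S \<le> card (A \<union> {v} \<union> {u. u<m \<and> adjB k l u (v-m)})"
    using sub by (intro card_mono) (auto simp: A_def fS)
  also have "\<dots> \<le> card A + card {v} + card {u. u<m \<and> adjB k l u (v-m)}"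
    by (meson card_Un_le add_le_mono order_trans order_refl)
  also have "\<dots> \<le> card A + 1 + (m-k-1)"
    using nbrC_card[OF assms(2), of "v-m"] by simp
  finally have "k < card A" using assms(1,4) by simp
  then show ?thesis using v(1) unfolding A_def by blast
qed

lemma no_sparse:
  assumes "k+1 \<le> l" "T \<subseteq> {0..<m+l}" "card T = l+1"
  shows "\<exists>u\<in>T. k < card {x\<in>T. GE k m l u x}"
proof -
  have fT: "finite T" using assms(2) finite_subset by blast
  have "\<not> T \<subseteq> {m..<m+l}"
  proof
    assume "T \<subseteq> {m..<m+l}"
    then have "card T \<le> l" using card_mono[of "{m..<m+l}" T] by simp
    then show False using assms(3) by simp
  qed
  then obtain u where u: "u \<in> T" "u < m" using assms(2) by (force simp: not_less)
  define B where "B = {x\<in>T. GE k m l u x}"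
  define N where "N = {w. w<l \<and> adjB k l u w}"
  have sub: "T \<subseteq> B \<union> {u} \<union> ((\<lambda>w. m+w) ` ({..<l} - N))"
  proof
    fix x assume x: "x \<in> T"
    show "x \<in> B \<union> {u} \<union> ((\<lambda>w. m+w) ` ({..<l} - N))"
    proof (cases "x < m")
      case True
      then show ?thesis using x u unfolding B_def GE_def by auto
    next
      case False
      then have "x - m < l" "x = m + (x - m)" using x assms(2) by auto
      then show ?thesis using x u False unfolding B_def GE_def N_def
        by (metis (mono_tags, lifting) DiffI Un_iff image_eqI lessThan_iff mem_Collect_eq not_less)
    qed
  qed
  have cN: "k+1 \<le> card N" unfolding N_def by (rule nbrI_card[OF assms(1)])
  have NL: "N \<subseteq> {..<l}" unfolding N_def by auto
  have cD: "card ({..<l} - N) = l - card N"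
    using card_Diff_subset[OF finite_subset[OF NL] NL] by simp
  have "card T \<le> card (B \<union> {u} \<union> ((\<lambda>w. m+w) ` ({..<l} - N)))"
    using sub by (intro card_mono) (auto simp: B_def fT)
  also have "\<dots> \<le> card B + card {u} + card ((\<lambda>w. m+w) ` ({..<l} - N))"
    by (meson card_Un_le add_le_mono order_trans order_refl)
  also have "\<dots> \<le> card B + 1 + (l - card N)"
    using card_image_le[of "{..<l} - N" "\<lambda>w. m+w"] cD by simp
  moreover have "card N \<le> l" using card_mono[OF _ NL] by simp
  ultimately have "k < card B" using assms(3) cN by linarith
  then show ?thesis using u(1) unfolding B_def by blast
qed

lemma param_cases:
  fixes i j k :: nat
  assumes "0 < i" and "0 < j"
    and "(int i - int k - 2) * (int j - int k - 2) \<ge> (int k + 1) ^ 2"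
  shows "(i = 1 \<and> j = 1) \<or> (k+3 \<le> i \<and> k+3 \<le> j \<and> (i-1)*(k+1) \<le> (j-1)*(i-1-k-1))"
proof -
  define a where "a = int i - int k - 2"
  define b where "b = int j - int k - 2"
  have ab: "a*b \<ge> (int k+1)^2" using assms(3) unfolding a_def b_def .
  have ka: "a \<ge> -(int k+1)" "b \<ge> -(int k+1)" using assms(1,2) unfolding a_def b_def by auto
  have "(int k+1)^2 > 0" by simp
  then have pos: "a*b > 0" using ab by linarith
  show ?thesis
  proof (cases "a > 0")
    case True
    then have "b > 0" using pos by (smt (verit) mult_nonpos_nonneg mult_nonneg_nonpos)
    then have ij: "k+3 \<le> i" "k+3 \<le> j" using True unfolding a_def b_def by auto
    have "int ((i-1)*(k+1)) \<le> int ((j-1)*(i-1-k-1))"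
    proof -
      have e1: "int ((i-1)*(k+1)) = (a + int k + 1)*(int k+1)" using ij unfolding a_def by (simp add: of_nat_diff algebra_simps)
      have e2: "int ((j-1)*(i-1-k-1)) = (b + int k + 1)*a" using ij unfolding a_def b_def by (simp add: of_nat_diff)
      have "(a + int k + 1)*(int k+1) \<le> (b + int k + 1)*a"
        using ab by (simp add: algebra_simps power2_eq_square)
      then show ?thesis unfolding e1 e2 .
    qed
    then have "(i-1)*(k+1) \<le> (j-1)*(i-1-k-1)" by (simp only: of_nat_le_iff)
    then show ?thesis using ij by blast
  next
    case False
    then have "a < 0" using pos by (cases "a = 0") auto
    then have bn: "b < 0" using pos by (smt (verit) mult_nonneg_nonneg mult_nonpos_nonpos zero_less_mult_iff)
    have "-a = int k+1"
    proof (rule ccontr)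
      assume "-a \<noteq> int k+1"
      then have "-a < int k + 1" "-a > 0" using ka \<open>a<0\<close> by auto
      then have "(-a)*(-b) < (int k+1)*(int k+1)"
        using ka bn by (smt (verit, best) mult_strict_right_mono mult_left_mono)
      then show False using ab by (simp add: power2_eq_square)
    qed
    moreover have "-b = int k+1"
    proof (rule ccontr)
      assume "-b \<noteq> int k+1"
      then have "-b < int k + 1" "-b > 0" using ka bn by auto
      then have "(-b)*(-a) < (int k+1)*(int k+1)"
        using ka \<open>a<0\<close> by (smt (verit, best) mult_strict_right_mono mult_left_mono)
      then show False using ab by (simp add: power2_eq_square algebra_simps)
    qed
    ultimately show ?thesis unfolding a_def b_def by auto
  qed
qed

theorem theorem6p2:
  fixes i j k :: nat
  assumes "0 < i" and "0 < j"
    and "(int i - int k - 2) * (int j - int k - 2) \<ge> (int k + 1) ^ 2"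
  shows "ramsey_k split_graph k i j = i + j - 1"
proof -
  define P where "P (n::nat) \<longleftrightarrow> (\<forall>E. simple_graph {0..<n} E \<and> split_graph {0..<n} E \<longrightarrow>
      (\<exists>S. k_dense_set {0..<n} E k i S) \<or> (\<exists>S. k_sparse_set {0..<n} E k j S))" for n
  have R: "ramsey_k split_graph k i j = (LEAST n. P n)" unfolding ramsey_k_def P_def by simp
  have up: "P (i+j-1)"
    unfolding P_def
  proof (intro allI impI)
    fix E assume "simple_graph {0..<i+j-1} E \<and> split_graph {0..<i+j-1} E"
    then obtain C I where CI: "C \<union> I = {0..<i+j-1}" "C \<inter> I = {}"
      "\<forall>u\<in>C. \<forall>v\<in>C. u \<noteq> v \<longrightarrow> E u v" "\<forall>u\<in>I. \<forall>v\<in>I. \<not> E u v"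
      unfolding split_graph_def by blast
    have fin: "finite C" "finite I" using CI(1) by (metis finite_Un finite_atLeastLessThan)+
    have "card C + card I = i+j-1" using card_Un_disjoint[OF fin CI(2)] CI(1) by simp
    then have "i \<le> card C \<or> j \<le> card I" using assms(1,2) by linarith
    then show "(\<exists>S. k_dense_set {0..<i+j-1} E k i S) \<or> (\<exists>S. k_sparse_set {0..<i+j-1} E k j S)"
    proof
      assume "i \<le> card C"
      then obtain S where S: "S \<subseteq> C" "card S = i" using obtain_subset_with_card_n by metis
      have "\<forall>v\<in>S. {u\<in>S. compl_adj E v u} = {}" using S CI(3) unfolding compl_adj_def by blast
      then have "\<forall>v\<in>S. card {u\<in>S. compl_adj E v u} = 0" by (metis card.empty)
      then have "k_dense_set {0..<i+j-1} E k i S"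
        unfolding k_dense_set_def k_sparse_set_def using S CI(1) by auto
      then show ?thesis by blast
    next
      assume "j \<le> card I"
      then obtain S where S: "S \<subseteq> I" "card S = j" using obtain_subset_with_card_n by metis
      have "\<forall>v\<in>S. {u\<in>S. E v u} = {}" using S CI(4) by blast
      then have "\<forall>v\<in>S. card {u\<in>S. E v u} = 0" by (metis card.empty)
      then have "k_sparse_set {0..<i+j-1} E k j S"
        unfolding k_sparse_set_def using S CI(1) by auto
      then show ?thesis by blast
    qed
  qed
  have low: "\<not> P n" if n: "n < i+j-1" for n
  proof -
    from param_cases[OF assms] show ?thesis
    proof
      assume ij: "i = 1 \<and> j = 1"
      then have n0: "n = 0" using n by simp
      have "simple_graph {0..<n} (\<lambda>_ _. False)" "split_graph {0..<n} (\<lambda>_ _. False)"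
        unfolding simple_graph_def split_graph_def n0 by auto
      moreover have "\<not> k_dense_set {0..<n} (\<lambda>_ _. False) k i S" for S
        unfolding k_dense_set_def k_sparse_set_def n0 using ij by auto
      moreover have "\<not> k_sparse_set {0..<n} (\<lambda>_ _. False) k j S" for S
        unfolding k_sparse_set_def n0 using ij by auto
      ultimately show ?thesis unfolding P_def by blast
    next
      assume h: "k+3 \<le> i \<and> k+3 \<le> j \<and> (i-1)*(k+1) \<le> (j-1)*(i-1-k-1)"
      define m where "m = i-1"
      define l where "l = j-1"
      have hm: "k+1 \<le> m" "k+1 \<le> l" "m*(k+1) \<le> l*(m-k-1)" using h unfolding m_def l_def by auto
      have nml: "{0..<n} \<subseteq> {0..<m+l}" using n unfolding m_def l_def by auto
      have im: "i = m+1" "j = l+1" using assms(1,2) unfolding m_def l_def by auto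
      define E where "E = GE k m l"
      have "simple_graph {0..<n} E" unfolding simple_graph_def E_def GE_def by auto
      moreover have "split_graph {0..<n} E"
        unfolding split_graph_def
        by (rule exI[of _ "{0..<n} \<inter> {..<m}"], rule exI[of _ "{0..<n} - {..<m}"])
          (auto simp: E_def GE_def)
      moreover have "\<not> k_dense_set {0..<n} E k i S" for S
      proof
        assume "k_dense_set {0..<n} E k i S"
        then have S: "S \<subseteq> {0..<m+l}" "card S = m+1" "\<forall>v\<in>S. card {u\<in>S. compl_adj E v u} \<le> k"
          unfolding k_dense_set_def k_sparse_set_def using nml im by auto
        show False using no_dense[OF hm(1) hm(3) S(1,2)] S(3) unfolding E_def by fastforce
      qed
      moreover have "\<not> k_sparse_set {0..<n} E k j S" for S
      proof
        assume "k_sparse_set {0..<n} E k j S"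
        then have S: "S \<subseteq> {0..<m+l}" "card S = l+1" "\<forall>v\<in>S. card {u\<in>S. E v u} \<le> k"
          unfolding k_sparse_set_def using nml im by auto
        show False using no_sparse[OF hm(2) S(1,2)] S(3) unfolding E_def by fastforce
      qed
      ultimately show ?thesis unfolding P_def by blast
    qed
  qed
  show ?thesis unfolding R
    by (rule Least_equality) (use up low in \<open>auto simp: not_less[symmetric]\<close>)
qed

end
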